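(* If $X$ is an infinite set, then the preorder $\mathbf{U}(X)$ has no Heyting negation: there exists $\beta\in\mathbf{U}(X)$ such that for every $\alpha\in\mathbf{U}(X)$ there is $\gamma\in\mathbf{U}(X)$ for which the equivalence $\gamma\wedge\beta\sqsubseteq\bot\iff\gamma\sqsubseteq\alpha$ fails. Consequently $\mathbf{U}(X)$ also has no Heyting implication.
   Context: For functions $\alpha,\beta:X\to[0,1]$ on a set $X$, write $\alpha\sqsubseteq\beta$ if for every $\varepsilon>0$ there exists $\delta>0$ such that for all $x\in X$, $\alpha(x)\le\delta$ implies $\beta(x)\le\varepsilon$. $\mathbf{U}(X)$ is the preorder of all functions $X\to[0,1]$ ordered by $\sqsubseteq$. In it the meet $\gamma\wedge\beta$ is the pointwise maximum, the top is the constant $0$ function, and $\bot$ denotes the bottom element (e.g. the constant function $1$; any function with positive infimum is isomorphic to it). *)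

theory Defs
  imports Main "HOL.Real"
begin

text \<open>The carrier of U(X): functions X -> [0,1], with X the universe of type 'a.\<close>
definition UX :: "('a \<Rightarrow> real) set" where
  "UX = {f. \<forall>x. 0 \<le> f x \<and> f x \<le> 1}"

definition ule :: "('a \<Rightarrow> real) \<Rightarrow> ('a \<Rightarrow> real) \<Rightarrow> bool" where
  "ule \<alpha> \<beta> \<longleftrightarrow> (\<forall>\<epsilon>>0. \<exists>\<delta>>0. \<forall>x. \<alpha> x \<le> \<delta> \<longrightarrow> \<beta> x \<le> \<epsilon>)"

definition umeet :: "('a \<Rightarrow> real) \<Rightarrow> ('a \<Rightarrow> real) \<Rightarrow> ('a \<Rightarrow> real)" where
  "umeet \<gamma> \<beta> = (\<lambda>x. max (\<gamma> x) (\<beta> x))"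

definition ubot :: "'a \<Rightarrow> real" where
  "ubot = (\<lambda>x. 1)"

end

theory Submission
  imports Defs
begin

lemma ule_bot_D: assumes "ule g ubot" shows "\<exists>d>0. \<forall>x. g x > d"
proof -
  have "(1/2::real) > 0" by simp
  then obtain d where d: "d>0" "\<forall>x. g x \<le> d \<longrightarrow> (1::real) \<le> 1/2"
    using assms unfolding ule_def ubot_def by blast
  have "\<forall>x. g x > d"
  proof
    fix x show "g x > d" using d(2)[rule_format, of x] by linarith
  qed
  thus ?thesis using d(1) by blast
qed

lemma ule_bot_I: assumes "c>0" "\<forall>x. g x \<ge> c" shows "ule g ubot"
  unfolding ule_def ubot_def
proof (intro allI impI)
  fix e :: real assume "e>0"
  have "\<forall>x. g x \<le> c/2 \<longrightarrow> 1 \<le> e"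
  proof (intro allI impI)
    fix x assume "g x \<le> c/2" thus "1 \<le> e" using assms(2)[rule_format, of x] assms(1) by linarith
  qed
  thus "\<exists>d>0. \<forall>x. g x \<le> d \<longrightarrow> 1 \<le> e" using assms(1) by (intro exI[of _ "c/2"]) simp
qed

lemma first_part:
  assumes "infinite (UNIV :: 'a set)"
  shows "\<exists>\<beta>::'a \<Rightarrow> real. \<beta> \<in> UX \<and>
            (\<forall>\<alpha>\<in>UX. \<exists>\<gamma>\<in>UX. \<not> (ule (umeet \<gamma> \<beta>) ubot \<longleftrightarrow> ule \<gamma> \<alpha>))"
proof -
  obtain f :: "nat \<Rightarrow> 'a" where inj: "inj f"
    using assms infinite_countable_subset by blast
  define \<beta> :: "'a \<Rightarrow> real" where "\<beta> y = (if y \<in> range f then 1 / (real (inv f y) + 1) else 1)" for y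
  have bpos: "\<beta> y > 0" for y unfolding \<beta>_def by auto
  have bf: "\<beta> (f n) = 1 / (real n + 1)" for n unfolding \<beta>_def using inj by auto
  have bUX: "\<beta> \<in> UX" unfolding UX_def \<beta>_def by auto
  have notb: "\<not> ule \<beta> ubot"
  proof
    assume "ule \<beta> ubot"
    then obtain d where d: "d>0" "\<forall>x. \<beta> x > d" using ule_bot_D by blast
    obtain n :: nat where n: "1/d < real n" using reals_Archimedean2 by blast
    have "\<beta> (f n) > d" using d by auto
    hence "1 / (real n + 1) > d" using bf by simp
    hence "1 > d * (real n + 1)" using d by (simp add: field_simps)
    moreover have "d * real n > 1" using n d by (simp add: field_simps)
    ultimately show False using d by (simp add: algebra_simps)
  qed
  show ?thesis
  proof (intro exI conjI ballI)
    show "\<beta> \<in> UX" by (rule bUX)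
    fix \<alpha> :: "'a \<Rightarrow> real" assume aU: "\<alpha> \<in> UX"
    show "\<exists>\<gamma>\<in>UX. \<not> (ule (umeet \<gamma> \<beta>) ubot \<longleftrightarrow> ule \<gamma> \<alpha>)"
    proof (rule ccontr)
      assume H: "\<not> ?thesis"
      hence H': "\<And>\<gamma>. \<gamma> \<in> UX \<Longrightarrow> (ule (umeet \<gamma> \<beta>) ubot \<longleftrightarrow> ule \<gamma> \<alpha>)" by blast
      have small: "\<alpha> x \<le> e" if epos: "e > 0" for x e
      proof -
        define g :: "'a \<Rightarrow> real" where "g y = (if y = x then 0 else 1)" for y
        have gU: "g \<in> UX" unfolding UX_def g_def by auto
        have "\<forall>y. umeet g \<beta> y \<ge> min 1 (\<beta> x)"
          unfolding umeet_def g_def by auto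
        moreover have "min 1 (\<beta> x) > 0" using bpos by simp
        ultimately have "ule (umeet g \<beta>) ubot" using ule_bot_I by blast
        hence "ule g \<alpha>" using H'[OF gU] by blast
        then obtain d where "d>0" "\<forall>y. g y \<le> d \<longrightarrow> \<alpha> y \<le> e" unfolding ule_def using epos by blast
        thus ?thesis unfolding g_def by auto
      qed
      have zU: "(\<lambda>_. 0::real) \<in> UX" unfolding UX_def by auto
      have "ule (\<lambda>_. 0::real) \<alpha>" unfolding ule_def using small by (meson zero_less_one)
      hence "ule (umeet (\<lambda>_. 0) \<beta>) ubot" using H'[OF zU] by blast
      moreover have "umeet (\<lambda>_. 0) \<beta> = \<beta>" unfolding umeet_def using bpos
        by (intro ext) (simp add: less_imp_le max_def)
      ultimately show False using notb by simp
    qed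
  qed
qed

theorem mainTheorem4:
  assumes "infinite (UNIV :: 'a set)"
  shows "(\<exists>\<beta>::'a \<Rightarrow> real. \<beta> \<in> UX \<and>
            (\<forall>\<alpha>\<in>UX. \<exists>\<gamma>\<in>UX. \<not> (ule (umeet \<gamma> \<beta>) ubot \<longleftrightarrow> ule \<gamma> \<alpha>)))
       \<and> (\<exists>\<beta>::'a \<Rightarrow> real. \<exists>\<alpha>. \<beta> \<in> UX \<and> \<alpha> \<in> UX \<and>
            (\<forall>\<delta>\<in>UX. \<exists>\<gamma>\<in>UX. \<not> (ule (umeet \<gamma> \<beta>) \<alpha> \<longleftrightarrow> ule \<gamma> \<delta>)))"
proof -
  obtain \<beta> :: "'a \<Rightarrow> real" where b: "\<beta> \<in> UX"
    "\<forall>\<alpha>\<in>UX. \<exists>\<gamma>\<in>UX. \<not> (ule (umeet \<gamma> \<beta>) ubot \<longleftrightarrow> ule \<gamma> \<alpha>)"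
    using first_part[OF assms] by blast
  have "ubot \<in> UX" unfolding UX_def ubot_def by auto
  thus ?thesis using b by blast
qed

end
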